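(* Let $\alpha,\beta$ be relatively prime positive integers, let $n$ be a positive integer with $s=s(n)>2$, and let $(b,a)$ be an $n$-good pair. Then: (a) $a-\alpha b-\ell g_s$ is not a positive multiple of $\beta$ for any integer $\ell\ge0$; (b) a pair $(b',a')$ is $n$-good if and only if there exists $k\in\mathbb{Z}$ such that $a'=a+k\beta g_{s-2}\ge1$ and $b'=b-kg_{s-1}\ge1$; (c) with $a',b',k$ as in (b), $w_{s+1}(b',a')-w_{s+1}(b,a)=k(-\beta)^{s-1}$.
   Context: The $(\alpha,\beta)$-walk $w_k(a_1,a_2)$ for positive integers $a_1,a_2$ is given by $w_1=a_1$, $w_2=a_2$, $w_{k+2}=\alpha w_{k+1}+\beta w_k$ ($k\ge1$). For a positive integer $n$, $s(n;a_1,a_2)$ is the (largest) index $s$ with $w_s(a_1,a_2)=n$ ($-\infty$ if none), and $s(n)=\max_{a_1,a_2\ge1}s(n;a_1,a_2)$. A pair $(a_1,a_2)$ with $a_1,a_2\ge1$ is $n$-good if $s(n;a_1,a_2)=s(n)$. The sequence $g_k$: $g_1=1$, $g_2=\alpha$, $g_{k+2}=\alpha g_{k+1}+\beta g_k$ for $k\ge1$. *)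

theory Defs
  imports Main
begin

text \<open>The (alpha,beta)-walk; index k \<ge> 1 is meaningful (index 0 is an unused dummy).
  walk al be a1 a2 k = w_k(a1,a2).\<close>
fun walk :: "int \<Rightarrow> int \<Rightarrow> int \<Rightarrow> int \<Rightarrow> nat \<Rightarrow> int" where
  "walk al be a1 a2 0 = 0"
| "walk al be a1 a2 (Suc 0) = a1"
| "walk al be a1 a2 (Suc (Suc 0)) = a2"
| "walk al be a1 a2 (Suc (Suc (Suc k))) =
     al * walk al be a1 a2 (Suc (Suc k)) + be * walk al be a1 a2 (Suc k)"

fun gseq :: "int \<Rightarrow> int \<Rightarrow> nat \<Rightarrow> int" where
  "gseq al be 0 = 0"
| "gseq al be (Suc 0) = 1"
| "gseq al be (Suc (Suc k)) = al * gseq al be (Suc k) + be * gseq al be k"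

definition hit_set :: "int \<Rightarrow> int \<Rightarrow> int \<Rightarrow> int \<Rightarrow> int \<Rightarrow> nat set" where
  "hit_set al be n a1 a2 = {k. 1 \<le> k \<and> walk al be a1 a2 k = n}"

text \<open>s(n;a1,a2): largest index with w_s = n (only meaningful when hit_set is nonempty;
  otherwise it is -infinity, handled explicitly in n_good).\<close>
definition s_pair :: "int \<Rightarrow> int \<Rightarrow> int \<Rightarrow> int \<Rightarrow> int \<Rightarrow> nat" where
  "s_pair al be n a1 a2 = Max (hit_set al be n a1 a2)"

definition s_max :: "int \<Rightarrow> int \<Rightarrow> int \<Rightarrow> nat" where
  "s_max al be n = Max (\<Union>{hit_set al be n a1 a2 | a1 a2. 1 \<le> a1 \<and> 1 \<le> a2})"

definition n_good :: "int \<Rightarrow> int \<Rightarrow> int \<Rightarrow> int \<Rightarrow> int \<Rightarrow> bool" where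
  "n_good al be n a1 a2 \<longleftrightarrow> 1 \<le> a1 \<and> 1 \<le> a2 \<and> hit_set al be n a1 a2 \<noteq> {}
     \<and> s_pair al be n a1 a2 = s_max al be n"

end

theory Submission
  imports Defs
begin

lemma cop_shift:
  fixes x y c :: int
  assumes "coprime x y" shows "coprime (x + y * c) y"
proof (rule coprimeI)
  fix d assume d1: "d dvd x + y * c" and d2: "d dvd y"
  have "d dvd y * c" using d2 by simp
  then have "d dvd x" using d1 by (simp add: dvd_add_left_iff)
  then show "is_unit d" using d2 assms coprime_common_divisor by blast
qed

lemma walk_formula:
  "walk al be x y (Suc (Suc k)) = gseq al be (Suc k) * y + be * gseq al be k * x
   \<and> walk al be x y (Suc (Suc (Suc k))) = gseq al be (Suc (Suc k)) * y + be * gseq al be (Suc k) * x"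
proof (induction k)
  case 0
  then show ?case by simp
next
  case (Suc k)
  let ?w = "walk al be x y" and ?g = "gseq al be"
  have A: "?w (Suc (Suc (Suc k))) = ?g (Suc (Suc k)) * y + be * ?g (Suc k) * x" using Suc by blast
  have B: "?w (Suc (Suc k)) = ?g (Suc k) * y + be * ?g k * x" using Suc by blast
  have C: "?w (Suc (Suc (Suc (Suc k)))) = al * ?w (Suc (Suc (Suc k))) + be * ?w (Suc (Suc k))" by simp
  have D: "?g (Suc (Suc (Suc k))) = al * ?g (Suc (Suc k)) + be * ?g (Suc k)" by simp
  have "?w (Suc (Suc (Suc (Suc k)))) = ?g (Suc (Suc (Suc k))) * y + be * ?g (Suc (Suc k)) * x"
    unfolding C A B D by (simp add: algebra_simps)
  then show ?case using A by simp
qed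

lemma walkF: "walk al be x y (Suc (Suc k)) = gseq al be (Suc k) * y + be * gseq al be k * x"
  using walk_formula by blast

lemma gseq_pos:
  assumes "0 < al" "0 < be"
  shows "0 \<le> gseq al be k \<and> 1 \<le> gseq al be (Suc k) \<and> int k \<le> gseq al be (Suc k)"
proof (induction k rule: nat_less_induct)
  case (1 k)
  show ?case
  proof (cases k)
    case 0 then show ?thesis by simp
  next
    case (Suc j)
    note kk = Suc
    show ?thesis
    proof (cases j)
      case 0 then show ?thesis using kk assms by simp
    next
      case (Suc i)
      have h1: "0 \<le> gseq al be i \<and> 1 \<le> gseq al be (Suc i) \<and> int i \<le> gseq al be (Suc i)"
        using 1 kk Suc by auto
      have h2: "0 \<le> gseq al be j \<and> 1 \<le> gseq al be (Suc j) \<and> int j \<le> gseq al be (Suc j)"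
        using 1 kk Suc by auto
      have e: "gseq al be (Suc k) = al * gseq al be (Suc j) + be * gseq al be j"
        using kk by simp
      have a1: "al * gseq al be (Suc j) \<ge> gseq al be (Suc j)"
        using assms h2 by (simp add: mult_le_cancel_right1)
      have a2: "be * gseq al be j \<ge> 1"
        using assms h1 Suc using mult_mono[of 1 be 1 "gseq al be j"] by simp 
      have "gseq al be (Suc k) \<ge> gseq al be (Suc j) + 1" using e a1 a2 by linarith
      then show ?thesis using h2 kk by auto
    qed
  qed
qed

lemma gseq_cop_be:
  fixes al be :: int
  assumes "coprime al be"
  shows "coprime (gseq al be (Suc k)) be \<and> coprime (gseq al be (Suc (Suc k))) be"
proof (induction k)
  case 0
  then show ?case using assms by simp
next
  case (Suc k)
  have "coprime (al * gseq al be (Suc (Suc k))) be" using Suc assms by simp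
  then have "coprime (al * gseq al be (Suc (Suc k)) + be * gseq al be (Suc k)) be"
    by (rule cop_shift)
  then show ?case using Suc by simp
qed

lemma gseq_cop:
  fixes al be :: int
  assumes "coprime al be"
  shows "coprime (gseq al be (Suc k)) (gseq al be k)"
proof (induction k)
  case 0
  then show ?case by simp
next
  case (Suc k)
  have "coprime (be * gseq al be k) (gseq al be (Suc k))"
    using Suc gseq_cop_be[OF assms, of k] by (simp add: coprime_commute)
  then have "coprime (be * gseq al be k + gseq al be (Suc k) * al) (gseq al be (Suc k))"
    by (rule cop_shift)
  then show ?case by (simp add: algebra_simps)
qed

lemma cassini:
  "gseq al be (Suc (Suc k)) * gseq al be k - (gseq al be (Suc k))^2 = - ((- be) ^ k)"
proof (induction k)
  case 0
  then show ?case by simp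
next
  case (Suc k)
  let ?g = "gseq al be"
  have D: "?g (Suc (Suc (Suc k))) = al * ?g (Suc (Suc k)) + be * ?g (Suc k)" by simp
  have E: "?g (Suc (Suc k)) = al * ?g (Suc k) + be * ?g k" by simp
  have "?g (Suc (Suc (Suc k))) * ?g (Suc k) - (?g (Suc (Suc k)))^2
        = - be * (?g (Suc (Suc k)) * ?g k - (?g (Suc k))^2)"
    unfolding D E by (simp add: algebra_simps power2_eq_square)
  then show ?case using Suc by simp
qed

lemma hit_bound:
  fixes al be :: int
  assumes "0 < al" "0 < be" "1 \<le> x" "1 \<le> y" "walk al be x y j = n" "1 \<le> j"
  shows "j \<le> nat n + 2"
proof (cases j)
  case 0 then show ?thesis using assms by simp
next
  case (Suc i)
  show ?thesis
  proof (cases i)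
    case 0 then show ?thesis using Suc by simp
  next
    case (Suc k)
    have w: "n = gseq al be (Suc k) * y + be * gseq al be k * x"
      using assms(5) walkF[of al be x y k] \<open>j = Suc i\<close> Suc by simp
    have g: "0 \<le> gseq al be k" "int k \<le> gseq al be (Suc k)" "1 \<le> gseq al be (Suc k)"
      using gseq_pos[OF assms(1,2), of k] by auto
    have "gseq al be (Suc k) * y \<ge> gseq al be (Suc k)" using g assms by simp
    moreover have "be * gseq al be k * x \<ge> 0" using g assms by simp
    ultimately have "int k \<le> n" using w g by linarith
    then show ?thesis using \<open>j = Suc i\<close> Suc by simp
  qed
qed

lemma smax_props:
  fixes al be n :: int
  assumes "0 < al" "0 < be" "0 < n"
  shows "(\<exists>x y. 1 \<le> x \<and> 1 \<le> y \<and> walk al be x y (s_max al be n) = n \<and> 1 \<le> s_max al be n)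
       \<and> (\<forall>x y j. 1 \<le> x \<longrightarrow> 1 \<le> y \<longrightarrow> 1 \<le> j \<longrightarrow> walk al be x y j = n \<longrightarrow> j \<le> s_max al be n)"
proof -
  let ?U = "\<Union>{hit_set al be n a1 a2 | a1 a2. 1 \<le> a1 \<and> 1 \<le> a2}"
  have sub: "?U \<subseteq> {..nat n + 2}"
  proof
    fix j assume "j \<in> ?U"
    then obtain a1 a2 where "1 \<le> a1" "1 \<le> a2" "j \<in> hit_set al be n a1 a2" by blast
    then show "j \<in> {..nat n + 2}" using hit_bound[OF assms(1,2), of a1 a2 j n]
      unfolding hit_set_def by simp
  qed
  then have fin: "finite ?U" using finite_subset by blast
  have "1 \<in> hit_set al be n n 1" unfolding hit_set_def by simp
  then have ne: "?U \<noteq> {}" using assms(3) by (smt (verit) UnionI empty_iff mem_Collect_eq)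
  have "s_max al be n \<in> ?U" unfolding s_max_def using Max_in[OF fin ne] .
  then obtain a1 a2 where "1 \<le> a1" "1 \<le> a2" "s_max al be n \<in> hit_set al be n a1 a2" by blast
  then have P1: "\<exists>x y. 1 \<le> x \<and> 1 \<le> y \<and> walk al be x y (s_max al be n) = n \<and> 1 \<le> s_max al be n"
    unfolding hit_set_def by auto
  have P2: "j \<le> s_max al be n" if "1 \<le> x" "1 \<le> y" "1 \<le> j" "walk al be x y j = n" for x y j
  proof -
    have "j \<in> hit_set al be n x y" using that unfolding hit_set_def by simp
    then have "j \<in> ?U" using that by blast
    then show ?thesis unfolding s_max_def using Max_ge[OF fin] by blast
  qed
  show ?thesis using P1 P2 by blast
qed

lemma n_good_iff:
  fixes al be n :: int
  assumes "0 < al" "0 < be" "0 < n"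
  shows "n_good al be n x y \<longleftrightarrow> 1 \<le> x \<and> 1 \<le> y \<and> walk al be x y (s_max al be n) = n"
proof -
  note sp = smax_props[OF assms]
  have fin: "finite (hit_set al be n x y)" if "1 \<le> x" "1 \<le> y"
  proof (rule finite_subset[of _ "{..nat n + 2}"])
    show "hit_set al be n x y \<subseteq> {..nat n + 2}"
    proof
      fix j assume "j \<in> hit_set al be n x y"
      then show "j \<in> {..nat n + 2}" using hit_bound[OF assms(1,2) that, of j n]
        unfolding hit_set_def by simp
    qed
  qed simp
  show ?thesis
  proof
    assume g: "n_good al be n x y"
    then have h: "1 \<le> x" "1 \<le> y" "hit_set al be n x y \<noteq> {}" "s_pair al be n x y = s_max al be n"
      unfolding n_good_def by auto
    have "s_pair al be n x y \<in> hit_set al be n x y"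
      unfolding s_pair_def using Max_in[OF fin[OF h(1,2)] h(3)] .
    then show "1 \<le> x \<and> 1 \<le> y \<and> walk al be x y (s_max al be n) = n"
      using h unfolding hit_set_def by simp
  next
    assume h: "1 \<le> x \<and> 1 \<le> y \<and> walk al be x y (s_max al be n) = n"
    have f: "finite (hit_set al be n x y)" using fin h by simp
    have s1: "1 \<le> s_max al be n" using sp by blast
    have m: "s_max al be n \<in> hit_set al be n x y" using h s1 unfolding hit_set_def by simp
    then have ne: "hit_set al be n x y \<noteq> {}" by blast
    have le1: "s_max al be n \<le> s_pair al be n x y"
      unfolding s_pair_def using Max_ge[OF f m] .
    have "s_pair al be n x y \<in> hit_set al be n x y"
      unfolding s_pair_def using Max_in[OF f ne] .
    then have "1 \<le> s_pair al be n x y" "walk al be x y (s_pair al be n x y) = n"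
      unfolding hit_set_def by auto
    then have le2: "s_pair al be n x y \<le> s_max al be n"
      using sp h by blast
    show "n_good al be n x y" unfolding n_good_def using h ne le1 le2 by simp
  qed
qed

theorem lemma2p4:
  fixes al be n a b :: int
  assumes "0 < al" "0 < be" "coprime al be" "0 < n"
    and "s_max al be n > 2"
    and "n_good al be n b a"
  shows "(\<forall>l::int. 0 \<le> l \<longrightarrow>
            \<not> (\<exists>m::int. 0 < m \<and> a - al * b - l * gseq al be (s_max al be n) = m * be))
       \<and> (\<forall>b' a'. n_good al be n b' a' \<longleftrightarrow>
            (\<exists>k::int. a' = a + k * be * gseq al be (s_max al be n - 2) \<and> 1 \<le> a'
                    \<and> b' = b - k * gseq al be (s_max al be n - 1) \<and> 1 \<le> b'))
       \<and> (\<forall>b' a' (k::int). a' = a + k * be * gseq al be (s_max al be n - 2) \<and> 1 \<le> a'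
                    \<and> b' = b - k * gseq al be (s_max al be n - 1) \<and> 1 \<le> b'
            \<longrightarrow> walk al be b' a' (s_max al be n + 1) - walk al be b a (s_max al be n + 1)
                  = k * (- be) ^ (s_max al be n - 1))"
proof -
  let ?s = "s_max al be n"
  let ?g = "gseq al be"
  note sp = smax_props[OF assms(1,2,4)]
  note ng = n_good_iff[OF assms(1,2,4)]
  have bnd: "\<And>x y j. 1 \<le> x \<Longrightarrow> 1 \<le> y \<Longrightarrow> 1 \<le> j \<Longrightarrow> walk al be x y j = n \<Longrightarrow> j \<le> ?s"
    using sp by blast
  define t where "t = ?s - 2"
  have st: "?s = Suc (Suc t)" using assms(5) unfolding t_def by simp
  have i1: "?s - 2 = t" "?s - 1 = Suc t" "?s + 1 = Suc (Suc (Suc t))" using st by auto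
  have G2: "?g (Suc (Suc t)) = al * ?g (Suc t) + be * ?g t" by simp
  have gp: "0 \<le> ?g t" "1 \<le> ?g (Suc t)" using gseq_pos[OF assms(1,2), of t] by auto
  have good: "1 \<le> b" "1 \<le> a" "walk al be b a ?s = n" using ng assms(6) by auto
  have nf: "n = ?g (Suc t) * a + be * ?g t * b" using good(3) walkF[of al be b a t] st by simp
  have A: "\<forall>l::int. 0 \<le> l \<longrightarrow>
            \<not> (\<exists>m::int. 0 < m \<and> a - al * b - l * ?g ?s = m * be)"
  proof (intro allI impI notI)
    fix l :: int assume l: "0 \<le> l"
    assume "\<exists>m::int. 0 < m \<and> a - al * b - l * ?g ?s = m * be"
    then obtain m where m: "0 < m" "a - al * b - l * ?g ?s = m * be" by blast
    have ae: "a = al * b + l * ?g (Suc (Suc t)) + m * be" using m(2) st by simp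
    have "walk al be m (b + l * ?g (Suc t)) (Suc (Suc (Suc t)))
        = ?g (Suc (Suc t)) * (b + l * ?g (Suc t)) + be * ?g (Suc t) * m"
      using walkF[of al be m _ "Suc t"] by simp
    also have "\<dots> = n" unfolding nf ae G2 by (simp add: algebra_simps)
    finally have w: "walk al be m (b + l * ?g (Suc t)) (Suc (Suc (Suc t))) = n" .
    have "0 \<le> l * ?g (Suc t)" using l gp by simp
    then have "1 \<le> b + l * ?g (Suc t)" using good by linarith
    moreover have "1 \<le> m" using m(1) by simp
    ultimately have "Suc (Suc (Suc t)) \<le> ?s" using bnd[OF _ _ _ w] by simp
    then show False using st by simp
  qed
  have B: "\<forall>b' a'. n_good al be n b' a' \<longleftrightarrow>
            (\<exists>k::int. a' = a + k * be * ?g (?s - 2) \<and> 1 \<le> a'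
                    \<and> b' = b - k * ?g (?s - 1) \<and> 1 \<le> b')"
  proof (intro allI iffI)
    fix b' a' assume "n_good al be n b' a'"
    then have h: "1 \<le> b'" "1 \<le> a'" "walk al be b' a' ?s = n" using ng by auto
    have "n = ?g (Suc t) * a' + be * ?g t * b'" using h(3) walkF[of al be b' a' t] st by simp
    then have e: "?g (Suc t) * (a' - a) = (be * ?g t) * (b - b')" using nf by (simp add: algebra_simps)
    have cop: "coprime (?g (Suc t)) (be * ?g t)"
      using gseq_cop[OF assms(3), of t] gseq_cop_be[OF assms(3), of t] by simp
    have "?g (Suc t) dvd (be * ?g t) * (b - b')" using e by (metis dvd_triv_left)
    then have "?g (Suc t) dvd (b - b')" using cop by (metis coprime_dvd_mult_right_iff)
    then obtain k where k: "b - b' = ?g (Suc t) * k" by (elim dvdE)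
    have "?g (Suc t) * (a' - a) = ?g (Suc t) * (k * be * ?g t)" using e k by (simp add: algebra_simps)
    then have "a' - a = k * be * ?g t" using gp by simp
    then show "\<exists>k::int. a' = a + k * be * ?g (?s - 2) \<and> 1 \<le> a'
                    \<and> b' = b - k * ?g (?s - 1) \<and> 1 \<le> b'"
      using k h i1 by (intro exI[of _ k]) (simp add: algebra_simps)
  next
    fix b' a' assume "\<exists>k::int. a' = a + k * be * ?g (?s - 2) \<and> 1 \<le> a'
                    \<and> b' = b - k * ?g (?s - 1) \<and> 1 \<le> b'"
    then obtain k where k: "a' = a + k * be * ?g t" "1 \<le> a'" "b' = b - k * ?g (Suc t)" "1 \<le> b'"
      using i1 by auto
    have "walk al be b' a' ?s = ?g (Suc t) * a' + be * ?g t * b'" using walkF[of al be b' a' t] st by simp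
    also have "\<dots> = n" unfolding nf k(1,3) by (simp add: algebra_simps)
    finally show "n_good al be n b' a'" using ng k by simp
  qed
  have C: "\<forall>b' a' (k::int). a' = a + k * be * ?g (?s - 2) \<and> 1 \<le> a'
                    \<and> b' = b - k * ?g (?s - 1) \<and> 1 \<le> b'
            \<longrightarrow> walk al be b' a' (?s + 1) - walk al be b a (?s + 1) = k * (- be) ^ (?s - 1)"
  proof (intro allI impI)
    fix b' a' k assume "a' = a + k * be * ?g (?s - 2) \<and> 1 \<le> a'
                    \<and> b' = b - k * ?g (?s - 1) \<and> 1 \<le> b'"
    then have k: "a' = a + k * be * ?g t" "b' = b - k * ?g (Suc t)" using i1 by auto
    have "walk al be b' a' (?s + 1) - walk al be b a (?s + 1)
        = ?g (Suc (Suc t)) * (a' - a) + be * ?g (Suc t) * (b' - b)"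
      using walkF[of al be b' a' "Suc t"] walkF[of al be b a "Suc t"] i1 by (simp add: algebra_simps)
    also have "\<dots> = k * be * (?g (Suc (Suc t)) * ?g t - (?g (Suc t))^2)"
      unfolding k by (simp add: algebra_simps power2_eq_square)
    also have "\<dots> = k * (- be) ^ (Suc t)" unfolding cassini by simp
    finally show "walk al be b' a' (?s + 1) - walk al be b a (?s + 1) = k * (- be) ^ (?s - 1)"
      using i1 by simp
  qed
  show ?thesis using A B C by blast
qed

end
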